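(* Let $T_3$ be the tree with vertices $w,x,y,z,u_1,a_1,b_1,u_2,a_2,b_2$ and edges $wx,xy,yz,zu_1,u_1a_1,u_1b_1,zu_2,u_2a_2,u_2b_2$. Let $v$ be a vertex of $T_3$, $S$ a $\Delta_S$-star with $\Delta_S\ge 3$, and $G=T_3\rhd_v S$ a graph of order $n$ and maximum degree $\Delta\ge 3$. Then $\gamma^{\rm ID}(G)\le \left(\frac{\Delta-1}{\Delta}\right)n$.
   Context: An identifying code of a graph $G$ is a set $C\subseteq V(G)$ such that every vertex $v$ has $N[v]\cap C\neq\emptyset$ and for all distinct $u,v$, $N[u]\cap C \ne N[v]\cap C$, where $N[v]$ is the closed neighborhood; $\gamma^{\rm ID}(G)$ is its minimum size. A $k$-star is $K_{1,k}$. For a graph $G'$, a vertex $v$ of $G'$ and a star $S$, $G'\rhd_v S$ is the graph obtained from the disjoint union of $G'$ and $S$ by identifying $v$ with a leaf of $S$. *)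

theory Defs
  imports Complex_Main
begin

type_synonym 'a graph = "'a set \<times> 'a set set"

definition verts :: "'a graph \<Rightarrow> 'a set" where "verts G = fst G"
definition edges :: "'a graph \<Rightarrow> 'a set set" where "edges G = snd G"

definition simple_graph :: "'a graph \<Rightarrow> bool" where
  "simple_graph G \<longleftrightarrow> finite (verts G) \<and>
     (\<forall>e\<in>edges G. \<exists>u v. e = {u, v} \<and> u \<noteq> v \<and> u \<in> verts G \<and> v \<in> verts G)"

definition closed_nbhd :: "'a graph \<Rightarrow> 'a \<Rightarrow> 'a set" where
  "closed_nbhd G v = {v} \<union> {u \<in> verts G. {u, v} \<in> edges G}"

definition degree :: "'a graph \<Rightarrow> 'a \<Rightarrow> nat" where
  "degree G v = card {u \<in> verts G. {u, v} \<in> edges G}"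

definition max_degree :: "'a graph \<Rightarrow> nat" where
  "max_degree G = Max (degree G ` verts G)"

definition is_identifying_code :: "'a graph \<Rightarrow> 'a set \<Rightarrow> bool" where
  "is_identifying_code G C \<longleftrightarrow> C \<subseteq> verts G \<and>
     (\<forall>v\<in>verts G. closed_nbhd G v \<inter> C \<noteq> {}) \<and>
     (\<forall>u\<in>verts G. \<forall>v\<in>verts G. u \<noteq> v \<longrightarrow> closed_nbhd G u \<inter> C \<noteq> closed_nbhd G v \<inter> C)"

definition gamma_ID :: "'a graph \<Rightarrow> nat" where
  "gamma_ID G = Min (card ` {C. is_identifying_code G C})"

definition star :: "nat \<Rightarrow> nat graph" where
  "star k = ({0..k}, {{0, i} | i. i \<in> {1..k}})"

text \<open>G' \<rhd>_v S: disjoint union of G' and S, identifying v with a leaf of S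
  (the leaf 1; all leaves are symmetric).\<close>
definition glue_map :: "'a \<Rightarrow> 'a + nat \<Rightarrow> 'a + nat" where
  "glue_map v p = (if p = Inr 1 then Inl v else p)"

definition attach_star :: "'a graph \<Rightarrow> 'a \<Rightarrow> nat graph \<Rightarrow> ('a + nat) graph" where
  "attach_star G' v S =
     (glue_map v ` (Inl ` verts G' \<union> Inr ` verts S),
      (\<lambda>e. glue_map v ` e) ` ((\<lambda>e. Inl ` e) ` edges G' \<union> (\<lambda>e. Inr ` e) ` edges S))"

datatype t3v = W | X | Y | Z | U1 | A1 | B1 | U2 | A2 | B2

definition T3 :: "t3v graph" where
  "T3 = (UNIV,
     {{W, X}, {X, Y}, {Y, Z}, {Z, U1}, {U1, A1}, {U1, B1}, {Z, U2}, {U2, A2}, {U2, B2}})"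

end

theory Submission
  imports Defs
begin

definition NT :: "t3v \<Rightarrow> t3v set" where
  "NT t = {t} \<union> {s. {s, t} \<in> snd T3}"

lemma NT_simps:
  "NT W = {W, X}" "NT X = {W, X, Y}" "NT Y = {X, Y, Z}" "NT Z = {Y, Z, U1, U2}"
  "NT U1 = {Z, U1, A1, B1}" "NT A1 = {U1, A1}" "NT B1 = {U1, B1}"
  "NT U2 = {Z, U2, A2, B2}" "NT A2 = {U2, A2}" "NT B2 = {U2, B2}"
  by (auto simp: NT_def T3_def doubleton_eq_iff intro: t3v.exhaust)

lemma UNIV_t3v: "(UNIV :: t3v set) = {W, X, Y, Z, U1, A1, B1, U2, A2, B2}"
  using t3v.exhaust by auto

lemma finite_t3v[simp]: "finite (A :: t3v set)"
proof -
  have "finite (UNIV :: t3v set)" by (simp add: UNIV_t3v)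
  then show ?thesis by (rule finite_subset[OF subset_UNIV])
qed

lemma card_ins_Inr: "finite A \<Longrightarrow> 0 \<notin> A \<Longrightarrow> card (insert (Inr 0) (Inr ` A) :: ('a + nat) set) = Suc (card A)"
  by (subst card_insert_disjoint) (auto simp: card_image)

lemma card_t3v: "card (UNIV :: t3v set) = 10"
  unfolding UNIV_t3v by simp

lemma vertsG:
  assumes "k \<ge> 1"
  shows "verts (attach_star T3 v (star k)) = range Inl \<union> Inr ` ({0} \<union> {2..k})"
  using assms
  apply (auto simp: attach_star_def verts_def star_def T3_def glue_map_def image_iff)
  done

lemma glue_Inl_pt: "glue_map v (Inl x) = Inl x"
  by (simp add: glue_map_def)

lemma glue_Inl: "glue_map v ` (Inl ` A) = Inl ` A"
  by (force simp: glue_map_def)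

lemma glue_Inr: "glue_map v ` (Inr ` {0, i}) = (if i = 1 then {Inr 0, Inl v} else {Inr 0, Inr i})"
  by (auto simp: glue_map_def)

lemma edgesG:
  assumes "k \<ge> 1"
  shows "edges (attach_star T3 v (star k)) =
    (\<lambda>e. Inl ` e) ` snd T3 \<union> {{Inr 0, Inl v}} \<union> {{Inr 0, Inr i} | i. i \<in> {2..k}}"
proof -
  have 1: "(\<lambda>e. glue_map v ` e) ` ((\<lambda>e. Inl ` e) ` snd T3) = (\<lambda>e. Inl ` e) ` snd T3"
    by (simp only: image_image glue_Inl_pt)
  have 2: "(\<lambda>e. glue_map v ` e) ` ((\<lambda>e. Inr ` e) ` {{0, i} | i. i \<in> {1..k}})
      = (\<lambda>i. if i = 1 then {Inr 0, Inl v} else {Inr 0, Inr i}) ` {1..k}"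
  proof -
    have e: "{{0, i} | i. i \<in> {1..k}} = (\<lambda>i. {0::nat,i}) ` {1..k}" by auto
    show ?thesis unfolding e image_comp
      by (rule image_cong[OF refl]) (simp only: comp_def glue_Inr)
  qed
  have 3: "(\<lambda>i. if i = 1 then {Inr 0, Inl v} else {Inr 0, Inr i}) ` {1..k}
      = {{Inr 0, Inl v}} \<union> {{Inr 0, Inr i} | i. i \<in> {2..k}}"
    using assms by (auto simp: image_iff)
  show ?thesis
    unfolding attach_star_def edges_def snd_conv star_def image_Un 1
    using 2 3 by (simp add: T3_def Un_assoc)
qed

lemma Inl_fam:
  fixes F :: "'a set set" and a b :: "'a + 'b"
  shows "{a, b} \<in> (\<lambda>e. Inl ` e) ` F \<longleftrightarrow> (\<exists>s t. a = Inl s \<and> b = Inl t \<and> {s, t} \<in> F)"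
proof
  assume "{a, b} \<in> (\<lambda>e. Inl ` e) ` F"
  then obtain e where e: "e \<in> F" "{a, b} = Inl ` e" by auto
  then obtain s t where st: "a = Inl s" "b = Inl t" by (metis imageE insertI1 insertI2)
  have "(Inl ` e :: ('a + 'b) set) = Inl ` {s, t}"
  proof -
    have "Inl ` e = {a, b}" using e(2) by (rule sym)
    also have "\<dots> = Inl ` {s, t}" using st by simp
    finally show ?thesis .
  qed
  then have "e = {s, t}" by (subst (asm) inj_image_eq_iff[OF inj_Inl])
  then show "\<exists>s t. a = Inl s \<and> b = Inl t \<and> {s, t} \<in> F" using st e by blast
next
  assume "\<exists>s t. a = Inl s \<and> b = Inl t \<and> {s, t} \<in> F"
  then obtain s t where st: "a = Inl s" "b = Inl t" "{s, t} \<in> F" by blast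
  have "{a, b} = Inl ` {s, t}" using st by simp
  then show "{a, b} \<in> (\<lambda>e. Inl ` e) ` F" using st(3) by (rule image_eqI)
qed

context
  fixes v :: t3v and k :: nat and G
  assumes k1: "k \<ge> 1" and G: "G = attach_star T3 v (star k)"
begin

lemma adjG: "{a, b} \<in> edges G \<longleftrightarrow> (\<exists>s t. a = Inl s \<and> b = Inl t \<and> {s, t} \<in> snd T3)
   \<or> {a, b} = {Inr 0, Inl v} \<or> (\<exists>i\<in>{2..k}. {a, b} = {Inr 0, Inr i})"
  unfolding G edgesG[OF k1] Un_iff Inl_fam by blast

lemma vG: "verts G = range Inl \<union> Inr ` ({0} \<union> {2..k})"
  unfolding G using vertsG[OF k1] .

lemma adj_Inl: "{u, Inl t} \<in> edges G \<longleftrightarrow> (\<exists>s. u = Inl s \<and> {s, t} \<in> snd T3) \<or> (u = Inr 0 \<and> t = v)"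
  unfolding adjG by (auto simp: doubleton_eq_iff)

lemma adj_Inr0: "{u, Inr 0} \<in> edges G \<longleftrightarrow> u = Inl v \<or> (\<exists>i\<in>{2..k}. u = Inr i)"
  unfolding adjG by (auto simp: doubleton_eq_iff)

lemma adj_Inr: "i \<noteq> 0 \<Longrightarrow> {u, Inr i} \<in> edges G \<longleftrightarrow> u = Inr 0 \<and> i \<in> {2..k}"
  unfolding adjG by (auto simp: doubleton_eq_iff)

lemma cn_Inl: "closed_nbhd G (Inl t) = Inl ` NT t \<union> (if t = v then {Inr 0} else {})"
  unfolding closed_nbhd_def adj_Inl NT_def vG by auto

lemma cn_Inr0: "closed_nbhd G (Inr 0) = {Inr 0, Inl v} \<union> Inr ` {2..k}"
  unfolding closed_nbhd_def adj_Inr0 vG by auto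

lemma cn_Inr: "2 \<le> i \<Longrightarrow> i \<le> k \<Longrightarrow> closed_nbhd G (Inr i) = {Inr i, Inr 0}"
  unfolding closed_nbhd_def vG by (subst adj_Inr) auto

lemma sig_Inl: "closed_nbhd G (Inl t) \<inter> (Inl ` D \<union> {Inr 0} \<union> Inr ` {3..k})
   = Inl ` (NT t \<inter> D) \<union> (if t = v then {Inr 0} else {})"
  unfolding cn_Inl by auto

lemma sig_Inr0: "v \<in> D \<Longrightarrow> closed_nbhd G (Inr 0) \<inter> (Inl ` D \<union> {Inr 0} \<union> Inr ` {3..k})
   = {Inr 0, Inl v} \<union> Inr ` {3..k}"
  unfolding cn_Inr0 by auto

lemma sig_Inr2: "2 \<le> k \<Longrightarrow> closed_nbhd G (Inr 2) \<inter> (Inl ` D \<union> {Inr 0} \<union> Inr ` {3..k})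
   = {Inr 0}"
  by (subst cn_Inr) auto

lemma sig_Inri: "3 \<le> i \<Longrightarrow> i \<le> k \<Longrightarrow> closed_nbhd G (Inr i) \<inter> (Inl ` D \<union> {Inr 0} \<union> Inr ` {3..k})
   = {Inr i, Inr 0}"
  by (subst cn_Inr) auto

lemma verts_cases:
  assumes "x \<in> verts G"
  obtains t where "x = Inl t" | "x = Inr 0" | "x = Inr 2" | i where "3 \<le> i" "i \<le> k" "x = Inr i"
proof -
  have "(\<exists>t. x = Inl t) \<or> x = Inr 0 \<or> (\<exists>i. 2 \<le> i \<and> i \<le> k \<and> x = Inr i)"
    using assms unfolding vG by auto
  moreover have "2 \<le> i \<Longrightarrow> i = 2 \<or> 3 \<le> i" for i :: nat by auto
  ultimately show ?thesis using that by blast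
qed

lemma code_ok:
  assumes k3: "k \<ge> 3" and vD: "v \<in> D"
    and dom: "\<And>t. t \<noteq> v \<Longrightarrow> NT t \<inter> D \<noteq> {}"
    and sep: "\<And>t t'. t \<noteq> v \<Longrightarrow> t' \<noteq> v \<Longrightarrow> t \<noteq> t' \<Longrightarrow> NT t \<inter> D \<noteq> NT t' \<inter> D"
  shows "is_identifying_code G (Inl ` D \<union> {Inr 0} \<union> Inr ` {3..k})"
proof -
  let ?C = "Inl ` D \<union> {Inr 0} \<union> Inr ` {3..k}"
  define sg where "sg x = closed_nbhd G x \<inter> ?C" for x
  have s1: "sg (Inl t) = Inl ` (NT t \<inter> D) \<union> (if t = v then {Inr 0} else {})" for t
    unfolding sg_def by (rule sig_Inl)
  have s2: "sg (Inr 0) = {Inr 0, Inl v} \<union> Inr ` {3..k}"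
    unfolding sg_def using vD by (rule sig_Inr0)
  have s3: "sg (Inr 2) = {Inr 0}"
    unfolding sg_def using k3 by (intro sig_Inr2) auto
  have s4: "3 \<le> i \<Longrightarrow> i \<le> k \<Longrightarrow> sg (Inr i) = {Inr i, Inr 0}" for i
    unfolding sg_def by (rule sig_Inri)
  have i3: "Inr 3 \<in> Inr ` {3..k}" using k3 by auto
  have ne: "sg x \<noteq> {}" if "x \<in> verts G" for x
    using that
  proof (cases rule: verts_cases)
    case (1 t)
    then show ?thesis using dom[of t] by (cases "t = v") (auto simp: s1)
  qed (auto simp: s2 s3 s4)
  have m1: "Inr j \<notin> sg (Inl t)" if "j \<noteq> 0" for j t using that by (auto simp: s1)
  have m2: "Inl v \<in> sg (Inr 0)" by (simp add: s2)
  have m3: "Inl u \<notin> sg (Inr 2)" for u by (simp add: s3)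
  have m3': "Inl u \<notin> sg (Inr i)" if "3 \<le> i" "i \<le> k" for u i using that by (simp add: s4)
  have m4: "Inr 0 \<in> sg (Inl t) \<longleftrightarrow> t = v" for t by (auto simp: s1)
  have m5: "Inl v \<in> sg (Inl v)" using vD by (simp add: s1 NT_def)
  have m6: "Inr 0 \<in> sg (Inr 2)" by (simp add: s3)
  have m7: "Inr 3 \<in> sg (Inr 0)" using k3 by (simp add: s2)
  have m8: "Inr i \<in> sg (Inr i)" if "3 \<le> i" "i \<le> k" for i using that by (simp add: s4)
  have m9: "Inr i \<notin> sg (Inr j)" if "3 \<le> i" "j \<noteq> i" "3 \<le> j" "j \<le> k" for i j
    using that by (simp add: s4)
  have m10: "Inr i \<notin> sg (Inr 2)" if "3 \<le> i" for i using that by (simp add: s3)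
  have m11: "Inr 0 \<in> sg (Inr i)" if "3 \<le> i" "i \<le> k" for i using that by (simp add: s4)
  have sepx: "sg x \<noteq> sg y" if "x \<in> verts G" "y \<in> verts G" "x \<noteq> y" for x y
    using that(1)
  proof (cases rule: verts_cases)
    case (1 t)
    note x = this
    show ?thesis using that(2)
    proof (cases rule: verts_cases)
      case (1 t')
      show ?thesis
      proof (cases "t = v \<or> t' = v")
        case True
        then have "t \<noteq> v \<or> t' \<noteq> v" using x 1 that(3) by auto
        then show ?thesis unfolding x 1 using m4[of t] m4[of t'] True by blast
      next
        case False
        then have ne1: "NT t \<inter> D \<noteq> NT t' \<inter> D" using sep x 1 that(3) by auto
        have "sg (Inl t) = Inl ` (NT t \<inter> D)" "sg (Inl t') = Inl ` (NT t' \<inter> D)"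
          using False by (simp_all add: s1)
        then show ?thesis unfolding x 1 using ne1 inj_image_eq_iff[OF inj_Inl] by metis
      qed
    next
      case 2
      show ?thesis unfolding x 2 using m1[of 3] m7 by fastforce
    next
      case 3
      show ?thesis unfolding x 3
      proof (cases "t = v")
        case True
        then show "sg (Inl t) \<noteq> sg (Inr 2)" using m5 m3[of v] by fastforce
      next
        case False
        then show "sg (Inl t) \<noteq> sg (Inr 2)" using m4[of t] m6 by fastforce
      qed
    next
      case (4 i)
      show ?thesis unfolding x 4 using m1[of i] m8[OF 4(1,2)] 4(1) by fastforce
    qed
  next
    case 2
    note x = this
    show ?thesis using that(2)
    proof (cases rule: verts_cases)
      case (1 t')
      show ?thesis unfolding x 1 using m1[of 3] m7 by fastforce
    next
      case 2 then show ?thesis using x that(3) by simp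
    next
      case 3 show ?thesis unfolding x 3 using m2 m3[of v] by fastforce
    next
      case (4 i) show ?thesis unfolding x 4 using m2 m3'[OF 4(1,2), of v] by fastforce
    qed
  next
    case 3
    note x = this
    show ?thesis using that(2)
    proof (cases rule: verts_cases)
      case (1 t')
      show ?thesis unfolding x 1
      proof (cases "t' = v")
        case True
        then show "sg (Inr 2) \<noteq> sg (Inl t')" using m5 m3[of v] by fastforce
      next
        case False
        then show "sg (Inr 2) \<noteq> sg (Inl t')" using m4[of t'] m6 by fastforce
      qed
    next
      case 2 show ?thesis unfolding x 2 using m2 m3[of v] by fastforce
    next
      case 3 then show ?thesis using x that(3) by simp
    next
      case (4 i) show ?thesis unfolding x 4 using m8[OF 4(1,2)] m10[OF 4(1)] by fastforce
    qed
  next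
    case (4 i)
    note x = this
    show ?thesis using that(2)
    proof (cases rule: verts_cases)
      case (1 t')
      show ?thesis unfolding x 1 using m1[of i] m8[OF x(1,2)] x(1) by fastforce
    next
      case 2 show ?thesis unfolding x 2 using m2 m3'[OF x(1,2), of v] by fastforce
    next
      case 3 show ?thesis unfolding x 3 using m8[OF x(1,2)] m10[OF x(1)] by fastforce
    next
      case (4 j)
      have "i \<noteq> j" using x 4 that(3) by auto
      then show ?thesis unfolding x 4 using m8[OF x(1,2)] m9[OF x(1) _ 4(1,2)] by fastforce
    qed
  qed
  have sub: "?C \<subseteq> verts G" unfolding vG by auto
  show ?thesis unfolding is_identifying_code_def
  proof (intro conjI ballI impI)
    show "?C \<subseteq> verts G" by (rule sub)
  next
    fix x assume "x \<in> verts G"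
    then show "closed_nbhd G x \<inter> ?C \<noteq> {}" using ne unfolding sg_def by blast
  next
    fix x y assume "x \<in> verts G" "y \<in> verts G" "x \<noteq> y"
    then show "closed_nbhd G x \<inter> ?C \<noteq> closed_nbhd G y \<inter> ?C" using sepx unfolding sg_def by blast
  qed
qed

lemma finite_vG: "finite (verts G)"
  unfolding vG by simp

lemma card_vG: "card (verts G) = k + 10"
proof -
  let ?A = "range (Inl :: t3v \<Rightarrow> t3v + nat)"
  let ?B = "insert (Inr 0) (Inr ` {2..k}) :: (t3v + nat) set"
  have e: "verts G = ?A \<union> ?B" unfolding vG by auto
  have a: "card ?A = 10" by (simp add: card_image card_t3v)
  have b: "card ?B = k"
  proof -
    have "card ?B = Suc (card {2..k})" by (rule card_ins_Inr) auto
    then show ?thesis using k1 by simp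
  qed
  have "card (?A \<union> ?B) = card ?A + card ?B" by (rule card_Un_disjoint) auto
  then show ?thesis using e a b by simp
qed

lemma gamma_le: "is_identifying_code G C \<Longrightarrow> gamma_ID G \<le> card C"
  unfolding gamma_ID_def
proof (rule Min_le)
  have "{C. is_identifying_code G C} \<subseteq> Pow (verts G)" by (auto simp: is_identifying_code_def)
  then have "finite {C. is_identifying_code G C}"
    by (rule finite_subset) (simp add: finite_vG)
  then show "finite (card ` {C. is_identifying_code G C})" by (rule finite_imageI)
qed auto

lemma deg_le: "x \<in> verts G \<Longrightarrow> degree G x \<le> max_degree G"
  unfolding max_degree_def using finite_vG by simp

lemma deg_Inr0: "degree G (Inr 0) = k"
proof -
  have "{u \<in> verts G. {u, Inr 0} \<in> edges G} = insert (Inl v) (Inr ` {2..k})"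
    unfolding adj_Inr0 vG by auto
  moreover have "card (insert (Inl v) (Inr ` {2..k}) :: (t3v + nat) set) = k"
  proof -
    have "card (Inr ` {2..k} :: (t3v + nat) set) = k - 1" by (simp add: card_image)
    then show ?thesis using k1 by (subst card_insert_disjoint) auto
  qed
  ultimately show ?thesis unfolding degree_def by simp
qed

lemma deg_InlZ: "v = Z \<Longrightarrow> degree G (Inl Z) = 4"
proof -
  assume vZ: "v = Z"
  have nz: "{s. {s, Z} \<in> snd T3} = {Y, U1, U2}"
    by (auto simp: T3_def doubleton_eq_iff)
  have "{u \<in> verts G. {u, Inl Z} \<in> edges G} = {Inl Y, Inl U1, Inl U2, Inr 0}"
    unfolding adj_Inl vG using vZ nz by auto
  then show ?thesis unfolding degree_def by simp
qed

lemma card_code: "k \<ge> 3 \<Longrightarrow> card (Inl ` D \<union> {Inr 0} \<union> Inr ` {3..k} :: (t3v + nat) set) = card D + k - 1"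
proof -
  assume k3: "k \<ge> 3"
  let ?A = "Inl ` D :: (t3v + nat) set"
  let ?B = "insert (Inr 0) (Inr ` {3..k}) :: (t3v + nat) set"
  have e: "Inl ` D \<union> {Inr 0} \<union> Inr ` {3..k} = ?A \<union> ?B" by auto
  have a: "card ?A = card D" by (simp add: card_image)
  have b: "card ?B = k - 1"
  proof -
    have "card ?B = Suc (card {3..k})" by (rule card_ins_Inr) auto
    then show ?thesis using k3 by simp
  qed
  have "card (?A \<union> ?B) = card ?A + card ?B" by (rule card_Un_disjoint) auto
  then show ?thesis using e a b k3 by simp
qed

end

lemma final_arith:
  fixes c d n :: nat
  assumes "c * d + n \<le> d * n" "d > 0"
  shows "real c \<le> (real d - 1) / real d * real n"
proof -
  have "real (c * d + n) \<le> real (d * n)" using assms(1) by (simp only: of_nat_le_iff)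
  then have "real c * real d + real n \<le> real d * real n" by simp
  then have "real c * real d \<le> (real d - 1) * real n" by (simp add: algebra_simps)
  then show ?thesis using assms(2) by (simp add: field_simps)
qed

definition chi :: "t3v set \<Rightarrow> bool list" where
  "chi A = [W \<in> A, X \<in> A, Y \<in> A, Z \<in> A, U1 \<in> A, A1 \<in> A, B1 \<in> A, U2 \<in> A, A2 \<in> A, B2 \<in> A]"

lemma neq_chi: "chi A \<noteq> chi B \<Longrightarrow> A \<noteq> B" by auto

definition good :: "t3v \<Rightarrow> t3v set \<Rightarrow> bool" where
  "good v D \<longleftrightarrow> v \<in> D \<and> (\<forall>t. t \<noteq> v \<longrightarrow> NT t \<inter> D \<noteq> {})
     \<and> (\<forall>t t'. t \<noteq> v \<longrightarrow> t' \<noteq> v \<longrightarrow> t \<noteq> t' \<longrightarrow> NT t \<inter> D \<noteq> NT t' \<inter> D)"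

lemma good_W: "good W {A1, A2, U1, U2, W, Z}"
  unfolding good_def
proof (intro conjI allI impI)
  fix t assume "t \<noteq> W"
  then show "NT t \<inter> {A1, A2, U1, U2, W, Z} \<noteq> {}" by (cases t) (simp_all add: NT_simps)
next
  fix t t' assume "t \<noteq> W" "t' \<noteq> W" "t \<noteq> t'"
  then show "NT t \<inter> {A1, A2, U1, U2, W, Z} \<noteq> NT t' \<inter> {A1, A2, U1, U2, W, Z}"
    by (intro neq_chi; cases t; cases t') (simp_all add: NT_simps chi_def)
qed simp

lemma good_X: "good X {A1, A2, B1, B2, X, Y}"
  unfolding good_def
proof (intro conjI allI impI)
  fix t assume "t \<noteq> X"
  then show "NT t \<inter> {A1, A2, B1, B2, X, Y} \<noteq> {}" by (cases t) (simp_all add: NT_simps)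
next
  fix t t' assume "t \<noteq> X" "t' \<noteq> X" "t \<noteq> t'"
  then show "NT t \<inter> {A1, A2, B1, B2, X, Y} \<noteq> NT t' \<inter> {A1, A2, B1, B2, X, Y}"
    by (intro neq_chi; cases t; cases t') (simp_all add: NT_simps chi_def)
qed simp

lemma good_Y: "good Y {A1, A2, B1, B2, W, Y}"
  unfolding good_def
proof (intro conjI allI impI)
  fix t assume "t \<noteq> Y"
  then show "NT t \<inter> {A1, A2, B1, B2, W, Y} \<noteq> {}" by (cases t) (simp_all add: NT_simps)
next
  fix t t' assume "t \<noteq> Y" "t' \<noteq> Y" "t \<noteq> t'"
  then show "NT t \<inter> {A1, A2, B1, B2, W, Y} \<noteq> NT t' \<inter> {A1, A2, B1, B2, W, Y}"
    by (intro neq_chi; cases t; cases t') (simp_all add: NT_simps chi_def)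
qed simp

lemma good_Z: "good Z {A1, A2, U1, U2, W, Y, Z}"
  unfolding good_def
proof (intro conjI allI impI)
  fix t assume "t \<noteq> Z"
  then show "NT t \<inter> {A1, A2, U1, U2, W, Y, Z} \<noteq> {}" by (cases t) (simp_all add: NT_simps)
next
  fix t t' assume "t \<noteq> Z" "t' \<noteq> Z" "t \<noteq> t'"
  then show "NT t \<inter> {A1, A2, U1, U2, W, Y, Z} \<noteq> NT t' \<inter> {A1, A2, U1, U2, W, Y, Z}"
    by (intro neq_chi; cases t; cases t') (simp_all add: NT_simps chi_def)
qed simp

lemma good_U1: "good U1 {A1, A2, B2, U1, W, Y}"
  unfolding good_def
proof (intro conjI allI impI)
  fix t assume "t \<noteq> U1"
  then show "NT t \<inter> {A1, A2, B2, U1, W, Y} \<noteq> {}" by (cases t) (simp_all add: NT_simps)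
next
  fix t t' assume "t \<noteq> U1" "t' \<noteq> U1" "t \<noteq> t'"
  then show "NT t \<inter> {A1, A2, B2, U1, W, Y} \<noteq> NT t' \<inter> {A1, A2, B2, U1, W, Y}"
    by (intro neq_chi; cases t; cases t') (simp_all add: NT_simps chi_def)
qed simp

lemma good_A1: "good A1 {A1, A2, B2, U1, W, Y}"
  unfolding good_def
proof (intro conjI allI impI)
  fix t assume "t \<noteq> A1"
  then show "NT t \<inter> {A1, A2, B2, U1, W, Y} \<noteq> {}" by (cases t) (simp_all add: NT_simps)
next
  fix t t' assume "t \<noteq> A1" "t' \<noteq> A1" "t \<noteq> t'"
  then show "NT t \<inter> {A1, A2, B2, U1, W, Y} \<noteq> NT t' \<inter> {A1, A2, B2, U1, W, Y}"
    by (intro neq_chi; cases t; cases t') (simp_all add: NT_simps chi_def)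
qed simp

lemma good_B1: "good B1 {A2, B1, B2, U1, W, Y}"
  unfolding good_def
proof (intro conjI allI impI)
  fix t assume "t \<noteq> B1"
  then show "NT t \<inter> {A2, B1, B2, U1, W, Y} \<noteq> {}" by (cases t) (simp_all add: NT_simps)
next
  fix t t' assume "t \<noteq> B1" "t' \<noteq> B1" "t \<noteq> t'"
  then show "NT t \<inter> {A2, B1, B2, U1, W, Y} \<noteq> NT t' \<inter> {A2, B1, B2, U1, W, Y}"
    by (intro neq_chi; cases t; cases t') (simp_all add: NT_simps chi_def)
qed simp

lemma good_U2: "good U2 {A1, A2, B1, U2, W, Y}"
  unfolding good_def
proof (intro conjI allI impI)
  fix t assume "t \<noteq> U2"
  then show "NT t \<inter> {A1, A2, B1, U2, W, Y} \<noteq> {}" by (cases t) (simp_all add: NT_simps)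
next
  fix t t' assume "t \<noteq> U2" "t' \<noteq> U2" "t \<noteq> t'"
  then show "NT t \<inter> {A1, A2, B1, U2, W, Y} \<noteq> NT t' \<inter> {A1, A2, B1, U2, W, Y}"
    by (intro neq_chi; cases t; cases t') (simp_all add: NT_simps chi_def)
qed simp

lemma good_A2: "good A2 {A1, A2, B1, U2, W, Y}"
  unfolding good_def
proof (intro conjI allI impI)
  fix t assume "t \<noteq> A2"
  then show "NT t \<inter> {A1, A2, B1, U2, W, Y} \<noteq> {}" by (cases t) (simp_all add: NT_simps)
next
  fix t t' assume "t \<noteq> A2" "t' \<noteq> A2" "t \<noteq> t'"
  then show "NT t \<inter> {A1, A2, B1, U2, W, Y} \<noteq> NT t' \<inter> {A1, A2, B1, U2, W, Y}"
    by (intro neq_chi; cases t; cases t') (simp_all add: NT_simps chi_def)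
qed simp

lemma good_B2: "good B2 {A1, B1, B2, U2, W, Y}"
  unfolding good_def
proof (intro conjI allI impI)
  fix t assume "t \<noteq> B2"
  then show "NT t \<inter> {A1, B1, B2, U2, W, Y} \<noteq> {}" by (cases t) (simp_all add: NT_simps)
next
  fix t t' assume "t \<noteq> B2" "t' \<noteq> B2" "t \<noteq> t'"
  then show "NT t \<inter> {A1, B1, B2, U2, W, Y} \<noteq> NT t' \<inter> {A1, B1, B2, U2, W, Y}"
    by (intro neq_chi; cases t; cases t') (simp_all add: NT_simps chi_def)
qed simp

lemma good_ex: "\<exists>D. good v D \<and> card D = (if v = Z then 7 else 6)"
proof (cases v)
  case W then show ?thesis using good_W by (intro exI[of _ "{A1, A2, U1, U2, W, Z}"]) simp
next
  case X then show ?thesis using good_X by (intro exI[of _ "{A1, A2, B1, B2, X, Y}"]) simp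
next
  case Y then show ?thesis using good_Y by (intro exI[of _ "{A1, A2, B1, B2, W, Y}"]) simp
next
  case Z then show ?thesis using good_Z by (intro exI[of _ "{A1, A2, U1, U2, W, Y, Z}"]) simp
next
  case U1 then show ?thesis using good_U1 by (intro exI[of _ "{A1, A2, B2, U1, W, Y}"]) simp
next
  case A1 then show ?thesis using good_A1 by (intro exI[of _ "{A1, A2, B2, U1, W, Y}"]) simp
next
  case B1 then show ?thesis using good_B1 by (intro exI[of _ "{A2, B1, B2, U1, W, Y}"]) simp
next
  case U2 then show ?thesis using good_U2 by (intro exI[of _ "{A1, A2, B1, U2, W, Y}"]) simp
next
  case A2 then show ?thesis using good_A2 by (intro exI[of _ "{A1, A2, B1, U2, W, Y}"]) simp
next
  case B2 then show ?thesis using good_B2 by (intro exI[of _ "{A1, B1, B2, U2, W, Y}"]) simp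
qed

theorem mainTheorem11:
  fixes v :: t3v and k n \<Delta> :: nat and G :: "(t3v + nat) graph"
  assumes "k \<ge> 3"
    and "G = attach_star T3 v (star k)"
    and "n = card (verts G)"
    and "\<Delta> = max_degree G"
    and "\<Delta> \<ge> 3"
  shows "real (gamma_ID G) \<le> ((real \<Delta> - 1) / real \<Delta>) * real n"
proof -
  have k3: "k \<ge> 3" by fact
  have k1: "k \<ge> 1" using assms(1) by simp
  note G = assms(2)
  obtain D where gD: "good v D" and cD: "card D = (if v = Z then 7 else 6)"
    using good_ex by blast
  let ?C = "Inl ` D \<union> {Inr 0} \<union> Inr ` {3..k}"
  have code: "is_identifying_code G ?C"
    by (rule code_ok[OF k1 G k3]) (use gD in \<open>auto simp: good_def\<close>)
  have g: "gamma_ID G \<le> card D + k - 1"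
    using gamma_le[OF k1 G code] card_code[OF k1 G k3, of D] by simp
  have n: "n = k + 10" using card_vG[OF k1 G] assms(3) by simp
  have dk: "\<Delta> \<ge> k"
    using deg_le[OF k1 G, of "Inr 0"] deg_Inr0[OF k1 G] assms(4) vG[OF k1 G] by simp
  have dZ: "v = Z \<Longrightarrow> \<Delta> \<ge> 4"
    using deg_le[OF k1 G, of "Inl Z"] deg_InlZ[OF k1 G] assms(4) vG[OF k1 G] by simp
  have ar: "(card D + k - 1) * \<Delta> + n \<le> \<Delta> * n"
  proof (cases "v = Z")
    case True
    then have "card D + k - 1 = k + 6" using cD by simp
    moreover have "k + 10 \<le> 4 * \<Delta>" using dZ[OF True] dk by simp
    ultimately show ?thesis unfolding n by (simp add: algebra_simps)
  next
    case False
    then have "card D + k - 1 = k + 5" using cD by simp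
    moreover have "k + 10 \<le> 5 * \<Delta>" using assms(5) dk by simp
    ultimately show ?thesis unfolding n by (simp add: algebra_simps)
  qed
  have "real (card D + k - 1) \<le> (real \<Delta> - 1) / real \<Delta> * real n"
    by (rule final_arith[OF ar]) (use assms(5) in simp)
  moreover have "real (gamma_ID G) \<le> real (card D + k - 1)" using g by simp
  ultimately show ?thesis by linarith
qed

end
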